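(* Let $k \geq l$ be positive integers with $k \geq 2$, and let $A \subset \mathbb{N}$ be such that the set $A^k + A^l$ has positive lower density. Then there is a constant $C>0$ such that for infinitely many positive integers $X$, $$A(X) \geq C\,\frac{\sqrt{X}}{(\log X)^{\alpha(k,l)}}, \qquad \text{where } \alpha(k,l) = \frac{k+l-2}{k+l}.$$
   Context: $\mathbb{N}$ denotes the set of positive integers. For sets $A,B$ of integers, $AB=\{ab: a\in A, b\in B\}$, $A+B=\{a+b: a\in A,b\in B\}$, $A^1=A$ and $A^k = A A^{k-1}$ for $k>1$. For $A\subset\mathbb{N}_0$ and $X>0$, $A(X)=|A\cap[1,X]|$. The lower density of $A$ is $\liminf_{X\to\infty} A(X)/X$. *)

theory Defs
  imports "HOL-Analysis.Analysis"
begin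

definition setprod :: "nat set \<Rightarrow> nat set \<Rightarrow> nat set" where
  "setprod A B = {a * b | a b. a \<in> A \<and> b \<in> B}"

definition setsum :: "nat set \<Rightarrow> nat set \<Rightarrow> nat set" where
  "setsum A B = {a + b | a b. a \<in> A \<and> b \<in> B}"

fun setpow :: "nat set \<Rightarrow> nat \<Rightarrow> nat set" where
  "setpow A 0 = {1}"
| "setpow A (Suc k) = setprod A (setpow A k)"

definition counting :: "nat set \<Rightarrow> real \<Rightarrow> nat" where
  "counting A X = card {a \<in> A. 1 \<le> a \<and> real a \<le> X}"

definition lower_density :: "nat set \<Rightarrow> ereal" where
  "lower_density A = Liminf at_top (\<lambda>X::real. ereal (real (counting A X) / X))"

end

theory Submission
  imports Defs
begin


lemma powr_diff_ge:
  fixes q x :: real assumes "0 < q" "q < 1" "x \<ge> 1"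
  shows "(x+1) powr q - x powr q \<ge> q * (x+1) powr (q-1)"
proof -
  have d: "\<And>t. x \<le> t \<Longrightarrow> t \<le> x+1 \<Longrightarrow> ((\<lambda>t. t powr q) has_real_derivative q * t powr (q-1)) (at t)"
    using assms by (intro has_real_derivative_powr) auto
  obtain z where z: "x < z" "z < x+1" "(x+1) powr q - x powr q = (x+1 - x) * (q * z powr (q-1))"
    using MVT2[of x "x+1" "\<lambda>t. t powr q" "\<lambda>t. q * t powr (q-1)", OF _ d] by auto
  have "(x+1) powr (q-1) \<le> z powr (q-1)"
    using z assms by (intro powr_mono2') auto
  then show ?thesis using z assms by simp
qed

lemma powsum_neg:
  fixes p :: real assumes "-1 < p" "p < 0" "N \<ge> 1"
  shows "(\<Sum>i=1..N. real i powr p) \<le> real N powr (p+1) / (p+1)"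
  using assms(3)
proof (induction N rule: dec_induct)
  case base
  then show ?case using assms by simp
next
  case (step n)
  have h: "(real n + 1) powr (p+1) - real n powr (p+1) \<ge> (p+1) * (real n + 1) powr p"
    using powr_diff_ge[of "p+1" "real n"] assms step(1) by simp
  have e: "real (Suc n) = real n + 1" by simp
  have "real (Suc n) powr p \<le> ((real n + 1) powr (p+1) - real n powr (p+1)) / (p+1)"
    unfolding e using h assms by (subst pos_le_divide_eq) (auto simp: mult.commute)
  then have "real (Suc n) powr p \<le> (real n + 1) powr (p+1) / (p+1) - real n powr (p+1) / (p+1)"
    by (simp add: diff_divide_distrib)
  then show ?case using step by (simp add: add.commute)
qed

lemma powsum:
  fixes p :: real assumes "-1 < p"
  shows "\<exists>c>0. \<forall>N\<ge>1. (\<Sum>i=1..N. real i powr p) \<le> c * real N powr (p+1)"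
proof (cases "p < 0")
  case True
  then show ?thesis using powsum_neg[OF assms True] assms
    by (intro exI[of _ "1/(p+1)"]) auto
next
  case False
  have "(\<Sum>i=1..N. real i powr p) \<le> 1 * real N powr (p+1)" if "N \<ge> 1" for N
  proof -
    have "(\<Sum>i=1..N. real i powr p) \<le> (\<Sum>i=1..N. real N powr p)"
      using False by (intro sum_mono powr_mono2) auto
    also have "\<dots> = real N powr (p+1)" using that by (simp add: powr_add)
    finally show ?thesis by simp
  qed
  then show ?thesis by (intro exI[of _ 1]) auto
qed


lemma half_powr_bound:
  fixes y N g :: real assumes "N/2 \<le> y" "y \<le> N" "0 < N"
  shows "y powr g \<le> 2 powr \<bar>g\<bar> * N powr g"
proof (cases "g \<ge> 0")
  case True
  have "y powr g \<le> N powr g" using assms True by (intro powr_mono2) auto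
  also have "\<dots> \<le> 2 powr \<bar>g\<bar> * N powr g"
    using True mult_right_mono[of 1 "2 powr g" "N powr g"] by (simp add: ge_one_powr_ge_zero)
  finally show ?thesis .
next
  case False
  have "y powr g \<le> (N/2) powr g" using assms False by (intro powr_mono2') auto
  also have "\<dots> = 2 powr \<bar>g\<bar> * N powr g" using False assms
    by (simp add: powr_divide powr_minus divide_simps)
  finally show ?thesis .
qed

lemma beta_sum:
  fixes b g :: real assumes "0<b" "b<1" "-1<g"
  shows "\<exists>K>0. \<forall>N\<ge>1. (\<Sum>i=1..N. real i powr (b-1) * real (N+1-i) powr g) \<le> K * real N powr (b+g)"
proof -
  obtain c1 where c1: "c1>0" "\<And>N. N\<ge>1 \<Longrightarrow> (\<Sum>i=1..N. real i powr (b-1)) \<le> c1 * real N powr (b-1+1)"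
    using powsum[of "b-1"] assms by auto
  obtain c2 where c2: "c2>0" "\<And>N. N\<ge>1 \<Longrightarrow> (\<Sum>i=1..N. real i powr g) \<le> c2 * real N powr (g+1)"
    using powsum[of g] assms by auto
  define A where "A = 2 powr \<bar>g\<bar>"
  define B where "B = 2 powr \<bar>b-1\<bar>"
  have AB: "A > 0" "B > 0" unfolding A_def B_def by auto
  have "(\<Sum>i=1..N. real i powr (b-1) * real (N+1-i) powr g) \<le> (A*c1 + B*c2) * real N powr (b+g)"
    if N: "N \<ge> 1" for N
  proof -
    have pt: "real i powr (b-1) * real (N+1-i) powr g \<le>
       A * real N powr g * real i powr (b-1) + B * real N powr (b-1) * real (N+1-i) powr g"
      if i: "i \<in> {1..N}" for i
    proof (cases "2*i \<le> N+1")
      case True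
      have "real (N+1-i) powr g \<le> A * real N powr g"
        unfolding A_def using True i by (intro half_powr_bound) auto
      then have "real i powr (b-1) * real (N+1-i) powr g \<le> real i powr (b-1) * (A * real N powr g)"
        by (intro mult_left_mono) auto
      moreover have "0 \<le> B * real N powr (b-1) * real (N+1-i) powr g" using AB by auto
      ultimately show ?thesis by (simp add: algebra_simps)
    next
      case False
      have "real i powr (b-1) \<le> B * real N powr (b-1)"
        unfolding B_def using False i by (intro half_powr_bound) auto
      then have "real i powr (b-1) * real (N+1-i) powr g \<le> (B * real N powr (b-1)) * real (N+1-i) powr g"
        by (intro mult_right_mono) auto
      moreover have "0 \<le> A * real N powr g * real i powr (b-1)" using AB by auto
      ultimately show ?thesis by (simp add: algebra_simps)
    qed
    have "(\<Sum>i=1..N. real i powr (b-1) * real (N+1-i) powr g) \<le>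
       (\<Sum>i=1..N. A * real N powr g * real i powr (b-1) + B * real N powr (b-1) * real (N+1-i) powr g)"
      by (intro sum_mono pt)
    also have "\<dots> = A * real N powr g * (\<Sum>i=1..N. real i powr (b-1)) + B * real N powr (b-1) * (\<Sum>i=1..N. real (N+1-i) powr g)"
      by (simp add: sum.distrib sum_distrib_left)
    also have "(\<Sum>i=1..N. real (N+1-i) powr g) = (\<Sum>i=1..N. real i powr g)"
      using sum.atLeastAtMost_rev[of "\<lambda>i. real i powr g" 1 N] by (simp add: add.commute)
    also have "A * real N powr g * (\<Sum>i=1..N. real i powr (b-1)) + B * real N powr (b-1) * (\<Sum>i=1..N. real i powr g)
      \<le> A * real N powr g * (c1 * real N powr (b-1+1)) + B * real N powr (b-1) * (c2 * real N powr (g+1))"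
      using AB c1(2)[OF N] c2(2)[OF N] by (intro add_mono mult_left_mono) auto
    also have "\<dots> = (A*c1 + B*c2) * real N powr (b+g)"
      using N by (simp add: algebra_simps flip: powr_add)
    finally show ?thesis .
  qed
  then show ?thesis using AB c1 c2 by (intro exI[of _ "A*c1+B*c2"]) (auto intro: add_pos_pos)
qed


lemma conv_to_zero:
  fixes u v :: "nat \<Rightarrow> real" and b g :: real
  assumes bg: "0<b" "b<1" "-1<g" and nn: "\<And>i. u i \<ge> 0" "\<And>i. v i \<ge> 0"
    and lim: "u \<longlonglongrightarrow> 0" "v \<longlonglongrightarrow> 0"
  shows "(\<lambda>N. (\<Sum>i=1..N. u i * v (N-i) * (real i powr (b-1) * real (N+1-i) powr g)) / real N powr (b+g)) \<longlonglongrightarrow> 0"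
proof -
  obtain K where K: "K>0" "\<And>N. N\<ge>1 \<Longrightarrow> (\<Sum>i=1..N. real i powr (b-1) * real (N+1-i) powr g) \<le> K * real N powr (b+g)"
    using beta_sum[OF bg] by auto
  obtain Bu where Bu: "Bu > 0" "\<And>i. norm (u i) \<le> Bu"
    using convergent_imp_Bseq[of u] lim(1) BseqE by (metis convergentI)
  obtain Bv where Bv: "Bv > 0" "\<And>i. norm (v i) \<le> Bv"
    using convergent_imp_Bseq[of v] lim(2) BseqE by (metis convergentI)
  define B where "B = Bu * Bv"
  have B: "B > 0" "\<And>i j. u i * v j \<le> B"
    unfolding B_def using Bu Bv nn by (auto intro!: mult_mono simp: abs_le_iff)
  define A where "A = 2 powr \<bar>g\<bar>"
  define A' where "A' = 2 powr \<bar>b-1\<bar>"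
  have AA: "A > 0" "A' > 0" unfolding A_def A'_def by auto
  define F where "F = (\<lambda>N. (\<Sum>i=1..N. u i * v (N-i) * (real i powr (b-1) * real (N+1-i) powr g)) / real N powr (b+g))"
  have Fnn: "F N \<ge> 0" for N unfolding F_def using nn by (auto intro!: sum_nonneg divide_nonneg_nonneg)
  have "\<forall>\<^sub>F N in sequentially. F N < eps" if eps: "eps > 0" for eps
  proof -
    define e where "e = sqrt (eps / (2*K))"
    have e: "e > 0" "e*e*K = eps/2" unfolding e_def using eps K by auto
    obtain I1 where I1: "\<And>i. i \<ge> I1 \<Longrightarrow> u i < e"
      using order_tendstoD(2)[OF lim(1) e(1)] by (auto simp: eventually_sequentially)
    obtain I2 where I2: "\<And>i. i \<ge> I2 \<Longrightarrow> v i < e"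
      using order_tendstoD(2)[OF lim(2) e(1)] by (auto simp: eventually_sequentially)
    define I where "I = max 1 (max I1 I2)"
    define D1 where "D1 = (\<Sum>i=1..<I. real i powr (b-1))"
    define D2 where "D2 = (\<Sum>i=1..I. real i powr g)"
    define R where "R = (\<lambda>N::nat. B*A*D1 * real N powr (-b) + B*A'*D2 * real N powr (-1-g))"
    have Rlim: "R \<longlonglongrightarrow> 0"
      unfolding R_def using bg
      by (intro tendsto_add_zero tendsto_mult_right_zero tendsto_neg_powr filterlim_real_sequentially) auto
    obtain N0 where N0: "\<And>N. N \<ge> N0 \<Longrightarrow> R N < eps/2"
      using order_tendstoD(2)[OF Rlim, of "eps/2"] eps by (auto simp: eventually_sequentially)
    have "F N < eps" if N: "N \<ge> max N0 (2*I)" for N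
    proof -
      have N1: "N \<ge> 1" "N \<ge> 2*I" "N \<ge> N0" "I \<ge> 1" using N unfolding I_def by auto
      have pt: "u i * v (N-i) * (real i powr (b-1) * real (N+1-i) powr g) \<le>
          e*e * (real i powr (b-1) * real (N+1-i) powr g)
          + B*A * real N powr g * (if i < I then real i powr (b-1) else 0)
          + B*A' * real N powr (b-1) * (if N+1-i \<le> I then real (N+1-i) powr g else 0)"
        if i: "i \<in> {1..N}" for i
      proof -
        have f0: "0 \<le> real i powr (b-1) * real (N+1-i) powr g" by auto
        have t2: "0 \<le> B*A * real N powr g * (if i < I then real i powr (b-1) else 0)"
          using B AA by auto
        have t3: "0 \<le> B*A' * real N powr (b-1) * (if N+1-i \<le> I then real (N+1-i) powr g else 0)"
          using B AA by auto
        consider "i \<ge> I \<and> N - i \<ge> I" | "i < I" | "N+1-i \<le> I" by linarith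
        then show ?thesis
        proof cases
          case 1
          have "u i \<le> e" "v (N-i) \<le> e" using 1 I1 I2 unfolding I_def
            by (auto intro: less_imp_le)
          then have "u i * v (N-i) \<le> e*e" using nn e by (intro mult_mono) auto
          then have "u i * v (N-i) * (real i powr (b-1) * real (N+1-i) powr g) \<le> e*e * (real i powr (b-1) * real (N+1-i) powr g)"
            using f0 by (intro mult_right_mono) auto
          then show ?thesis using t2 t3 by linarith
        next
          case 2
          have h: "real (N+1-i) powr g \<le> A * real N powr g"
            unfolding A_def using 2 i N1 by (intro half_powr_bound) auto
          have "u i * v (N-i) * (real i powr (b-1) * real (N+1-i) powr g) \<le> B * (real i powr (b-1) * (A * real N powr g))"
            using B B(2)[of i "N-i"] h nn by (intro mult_mono) (auto intro!: mult_left_mono)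
          also have "\<dots> = B*A * real N powr g * (if i < I then real i powr (b-1) else 0)"
            using 2 by simp
          finally show ?thesis using t3 f0 e by (smt (verit) mult_nonneg_nonneg)
        next
          case 3
          have h: "real i powr (b-1) \<le> A' * real N powr (b-1)"
            unfolding A'_def using 3 i N1 by (intro half_powr_bound) auto
          have "u i * v (N-i) * (real i powr (b-1) * real (N+1-i) powr g) \<le> B * ((A' * real N powr (b-1)) * real (N+1-i) powr g)"
            using B B(2)[of i "N-i"] h nn AA by (intro mult_mono) (auto intro!: mult_right_mono)
          also have "\<dots> = B*A' * real N powr (b-1) * (if N+1-i \<le> I then real (N+1-i) powr g else 0)"
            using 3 by simp
          finally show ?thesis using t2 f0 e by (smt (verit) mult_nonneg_nonneg)
        qed
      qed
      have s2: "(\<Sum>i=1..N. (if i < I then real i powr (b-1) else 0)) = D1"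
      proof -
        have "(\<Sum>i=1..N. (if i < I then real i powr (b-1) else 0)) = (\<Sum>i\<in>{i\<in>{1..N}. i < I}. real i powr (b-1))"
          by (rule sum.inter_filter[symmetric]) simp
        also have "{i\<in>{1..N}. i < I} = {1..<I}" using N1 by auto
        finally show ?thesis unfolding D1_def .
      qed
      have s3: "(\<Sum>i=1..N. (if N+1-i \<le> I then real (N+1-i) powr g else 0)) = D2"
      proof -
        have "(\<Sum>i=1..N. (if N+1-i \<le> I then real (N+1-i) powr g else 0)) = (\<Sum>i=1..N. (if i \<le> I then real i powr g else 0))"
          using sum.atLeastAtMost_rev[of "\<lambda>i. (if i \<le> I then real i powr g else 0)" 1 N] by (simp add: add.commute)
        also have "\<dots> = (\<Sum>i\<in>{i\<in>{1..N}. i \<le> I}. real i powr g)"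
          by (rule sum.inter_filter[symmetric]) simp
        also have "{i\<in>{1..N}. i \<le> I} = {1..I}" using N1 by auto
        finally show ?thesis unfolding D2_def .
      qed
      have "(\<Sum>i=1..N. u i * v (N-i) * (real i powr (b-1) * real (N+1-i) powr g)) \<le>
         (\<Sum>i=1..N. e*e * (real i powr (b-1) * real (N+1-i) powr g)
          + B*A * real N powr g * (if i < I then real i powr (b-1) else 0)
          + B*A' * real N powr (b-1) * (if N+1-i \<le> I then real (N+1-i) powr g else 0))"
        by (intro sum_mono pt)
      also have "\<dots> = e*e * (\<Sum>i=1..N. real i powr (b-1) * real (N+1-i) powr g)
          + B*A * real N powr g * (\<Sum>i=1..N. (if i < I then real i powr (b-1) else 0))
          + B*A' * real N powr (b-1) * (\<Sum>i=1..N. (if N+1-i \<le> I then real (N+1-i) powr g else 0))"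
        by (simp add: sum.distrib sum_distrib_left)
      also have "\<dots> \<le> e*e * (K * real N powr (b+g)) + B*A * real N powr g * D1 + B*A' * real N powr (b-1) * D2"
        unfolding s2 s3 using K(2)[OF N1(1)] e B AA by (intro add_mono mult_left_mono) auto
      also have "\<dots> = (e*e*K + R N) * real N powr (b+g)"
        unfolding R_def using N1 by (simp add: algebra_simps flip: powr_add)
      finally have "F N \<le> e*e*K + R N"
        unfolding F_def using N1 by (simp add: divide_le_eq)
      then show ?thesis using e N0[OF N1(3)] by linarith
    qed
    then show ?thesis unfolding eventually_sequentially by (intro exI[of _ "max N0 (2*I)"]) auto
  qed
  then have "F \<longlonglongrightarrow> 0"
    by (intro order_tendstoI) (auto intro: always_eventually less_le_trans[OF _ Fnn])
  then show ?thesis unfolding F_def .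
qed


definition cnt :: "nat set \<Rightarrow> nat \<Rightarrow> nat" where
  "cnt A x = card {a\<in>A. 1 \<le> a \<and> a \<le> x}"

lemma counting_cnt: "counting A (real x) = cnt A x"
  unfolding counting_def cnt_def by simp

lemma fin_cnt: "finite {a\<in>A. 1 \<le> a \<and> a \<le> (x::nat)}"
  by (rule finite_subset[of _ "{..x}"]) auto

lemma setpow1: "setpow A 1 = A"
  by (auto simp: setprod_def)

lemma zero_notin_setpow: "0 \<notin> A \<Longrightarrow> 0 \<notin> setpow A j"
  by (induction j) (auto simp: setprod_def intro: Nat.gr0I)

lemma cnt_setprod:
  "cnt (setprod A B) (2^n) \<le> (\<Sum>i=1..n+1. cnt A (2^i) * cnt B (2^(n+1-i)))"
proof -
  define P where "P i = {a\<in>A. 1 \<le> a \<and> a \<le> 2^i}" for i :: nat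
  define Q where "Q i = {b\<in>B. 1 \<le> b \<and> b \<le> 2^(n+1-i)}" for i :: nat
  have sub: "{x\<in>setprod A B. 1 \<le> x \<and> x \<le> 2^n} \<subseteq> (\<Union>i\<in>{1..n+1}. (\<lambda>(a,b). a*b) ` (P i \<times> Q i))"
  proof
    fix x assume "x \<in> {x\<in>setprod A B. 1 \<le> x \<and> x \<le> 2^n}"
    then obtain a b where x: "x = a*b" "a \<in> A" "b \<in> B" "1 \<le> a*b" "a*b \<le> 2^n"
      by (auto simp: setprod_def)
    have ab: "a \<ge> 1" "b \<ge> 1" using x(4) by (auto simp: Suc_le_eq)
    obtain m where m: "2^m \<le> a" "a < 2^(m+1)" using ex_power_ivl1[of 2 a] ab by auto
    have "a \<le> a*b" using ab by simp
    then have "(2::nat)^m \<le> 2^n" using m x by linarith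
    then have mn: "m \<le> n" by (simp add: power_le_imp_le_exp)
    have "2^m * b \<le> a * b" using m by simp
    also have "\<dots> \<le> 2^m * 2^(n-m)" using x mn by (simp flip: power_add)
    finally have "b \<le> 2^(n-m)" by simp
    then have "a \<in> P (m+1)" "b \<in> Q (m+1)" unfolding P_def Q_def using x ab m by auto
    then show "x \<in> (\<Union>i\<in>{1..n+1}. (\<lambda>(a,b). a*b) ` (P i \<times> Q i))"
      using mn x by (intro UN_I[of "m+1"]) auto
  qed
  have finPQ: "finite (P i)" "finite (Q i)" for i unfolding P_def Q_def using fin_cnt by auto
  have "cnt (setprod A B) (2^n) \<le> card (\<Union>i\<in>{1..n+1}. (\<lambda>(a,b). a*b) ` (P i \<times> Q i))"
    unfolding cnt_def using sub finPQ by (intro card_mono) auto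
  also have "\<dots> \<le> (\<Sum>i=1..n+1. card ((\<lambda>(a,b). a*b) ` (P i \<times> Q i)))"
    by (rule card_UN_le) simp
  also have "\<dots> \<le> (\<Sum>i=1..n+1. card (P i \<times> Q i))"
    by (intro sum_mono card_image_le) (simp add: finPQ)
  also have "\<dots> = (\<Sum>i=1..n+1. cnt A (2^i) * cnt B (2^(n+1-i)))"
    unfolding P_def Q_def cnt_def by (simp add: card_cartesian_product)
  finally show ?thesis .
qed

lemma cnt_setsum:
  assumes "0 \<notin> P" "0 \<notin> Q"
  shows "cnt (setsum P Q) x \<le> cnt P x * cnt Q x"
proof -
  define P' where "P' = {a\<in>P. 1 \<le> a \<and> a \<le> x}"
  define Q' where "Q' = {a\<in>Q. 1 \<le> a \<and> a \<le> x}"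
  have sub: "{s\<in>setsum P Q. 1 \<le> s \<and> s \<le> x} \<subseteq> (\<lambda>(a,b). a+b) ` (P' \<times> Q')"
  proof
    fix s assume "s \<in> {s\<in>setsum P Q. 1 \<le> s \<and> s \<le> x}"
    then obtain a b where s: "s = a+b" "a \<in> P" "b \<in> Q" "a+b \<le> x"
      by (auto simp: setsum_def)
    have "a \<ge> 1" "b \<ge> 1" using s assms by (auto simp: Suc_le_eq intro: Nat.gr0I)
    then show "s \<in> (\<lambda>(a,b). a+b) ` (P' \<times> Q')" unfolding P'_def Q'_def using s by force
  qed
  have fin: "finite P'" "finite Q'" unfolding P'_def Q'_def using fin_cnt by auto
  have "cnt (setsum P Q) x \<le> card ((\<lambda>(a,b). a+b) ` (P' \<times> Q'))"
    unfolding cnt_def using sub fin by (intro card_mono) auto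
  also have "\<dots> \<le> card (P' \<times> Q')" by (intro card_image_le) (simp add: fin)
  also have "\<dots> = cnt P x * cnt Q x" unfolding P'_def Q'_def cnt_def by (simp add: card_cartesian_product)
  finally show ?thesis .
qed


theorem theorem1p1:
  fixes k l :: nat and A :: "nat set"
  assumes "1 \<le> l" and "l \<le> k" and "2 \<le> k"
    and "A \<subseteq> {1..}"
    and "lower_density (setsum (setpow A k) (setpow A l)) > 0"
  shows "\<exists>C::real. C > 0 \<and>
    (\<exists>\<^sub>\<infinity>X::nat. X > 0 \<and>
       real (counting A (real X)) \<ge>
         C * sqrt (real X) / (ln (real X)) powr ((real k + real l - 2) / (real k + real l)))"
proof (rule ccontr)
  assume neg: "\<not> ?thesis"
  define b where "b = 2 / (real k + real l)"
  have b: "0 < b" "b < 1" unfolding b_def using assms(1-3) by auto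
  have al: "(real k + real l - 2) / (real k + real l) = 1 - b"
    unfolding b_def using assms(1-3) by (simp add: field_simps)
  have kl: "real k * b + real l * b = 2"
  proof -
    have "real k * b + real l * b = (real k + real l) * b" by (simp add: algebra_simps)
    also have "\<dots> = 2"
    proof -
      have nz: "real k + real l \<noteq> 0" using assms(1-3) by simp
      show ?thesis unfolding b_def using nz by (simp add: divide_eq_eq)
    qed
    finally show ?thesis .
  qed
  have A0: "0 \<notin> A" using assms(4) by auto
  have small: "\<forall>\<^sub>F X in sequentially. X > 0 \<longrightarrow> real (cnt A X) < C * sqrt (real X) / (ln (real X)) powr (1-b)"
    if C: "C > 0" for C
  proof -
    have "\<not> (\<exists>\<^sub>\<infinity>X::nat. X > 0 \<and> real (counting A (real X)) \<ge> C * sqrt (real X) / (ln (real X)) powr (1-b))"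
      using neg C unfolding al by blast
    then have "\<forall>\<^sub>\<infinity>X::nat. \<not> (X > 0 \<and> real (counting A (real X)) \<ge> C * sqrt (real X) / (ln (real X)) powr (1-b))"
      by simp
    then show ?thesis unfolding cofinite_eq_sequentially counting_cnt
      by eventually_elim auto
  qed
  define u where "u i = real (cnt A (2^i)) / (sqrt (2^i) * real i powr (b-1))" for i
  have unn: "u i \<ge> 0" for i unfolding u_def by auto
  have u0: "u \<longlonglongrightarrow> 0"
  proof (rule order_tendstoI)
    fix a :: real assume "a < 0" then show "\<forall>\<^sub>F i in sequentially. a < u i"
      using unn by (auto intro: always_eventually less_le_trans)
  next
    fix a :: real assume a: "0 < a"
    define C where "C = a * ln 2 powr (1-b)"
    have C: "C > 0" unfolding C_def using a by auto
    obtain X0 where X0: "\<And>X. X \<ge> X0 \<Longrightarrow> X > 0 \<longrightarrow> real (cnt A X) < C * sqrt (real X) / (ln (real X)) powr (1-b)"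
      using small[OF C] by (auto simp: eventually_sequentially)
    have "u i < a" if i: "i \<ge> max X0 1" for i
    proof -
      have "i < 2^i" by (rule less_exp)
      then have "X0 \<le> 2^i" using i by linarith
      then have "real (cnt A (2^i)) < C * sqrt (real (2^i)) / (ln (real (2^i))) powr (1-b)"
        using X0[of "2^i"] i by auto
      also have "ln (real (2^i)) = real i * ln 2" by (simp add: ln_realpow)
      also have "(real i * ln 2) powr (1-b) = real i powr (1-b) * ln 2 powr (1-b)"
        by (simp add: powr_mult)
      also have "C * sqrt (real (2^i)) / (real i powr (1-b) * ln 2 powr (1-b)) = a * (sqrt (2^i) * real i powr (b-1))"
      proof -
        have pp: "real i powr (1-b) * real i powr (b-1) = 1" using i by (simp flip: powr_add)
        show ?thesis unfolding C_def using i pp by (simp add: field_simps)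
      qed
      finally have "real (cnt A (2^i)) < a * (sqrt (2^i) * real i powr (b-1))" .
      then show ?thesis unfolding u_def using i by (simp add: divide_less_eq)
    qed
    then show "\<forall>\<^sub>F i in sequentially. u i < a" unfolding eventually_sequentially by blast
  qed
  define v where "v j m = real (cnt (setpow A j) (2^m)) / (sqrt (2^m) * real (m+1) powr (real j * b - 1))" for j m
  have vnn: "v j m \<ge> 0" for j m unfolding v_def by auto
  have v0: "v j \<longlonglongrightarrow> 0" if "j \<ge> 1" for j
    using that
  proof (induction j rule: dec_induct)
    case base
    define c where "c = 2 powr \<bar>b-1\<bar>"
    have le: "v 1 m \<le> c * u m" if m: "m \<ge> 1" for m
    proof -
      have h: "real m powr (b-1) \<le> c * real (m+1) powr (b-1)"
        unfolding c_def using m by (intro half_powr_bound) auto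
      have "real (cnt A (2^m)) = u m * (sqrt (2^m) * real m powr (b-1))"
        unfolding u_def using m by simp
      also have "\<dots> \<le> u m * (sqrt (2^m) * (c * real (m+1) powr (b-1)))"
        using h unn by (intro mult_left_mono) auto
      finally show ?thesis unfolding v_def setpow1
        by (simp add: divide_le_eq algebra_simps)
    qed
    show ?case
      by (rule tendsto_sandwich[of "\<lambda>_. 0" _ _ "\<lambda>m. c * u m"])
         (use vnn le in \<open>auto simp: eventually_sequentially intro!: exI[of _ 1] tendsto_mult_right_zero u0\<close>)
  next
    case (step j)
    define g where "g = real j * b - 1"
    have g: "-1 < g" unfolding g_def using step(1) b by simp
    define w where "w N = (\<Sum>i=1..N. u i * v j (N-i) * (real i powr (b-1) * real (N+1-i) powr g)) / real N powr (b+g)" for N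
    have w0: "w \<longlonglongrightarrow> 0" unfolding w_def
      by (rule conv_to_zero[OF b g]) (use unn vnn u0 step(3) in auto)
    have w1: "(\<lambda>n. sqrt 2 * w (Suc n)) \<longlonglongrightarrow> 0"
      by (intro tendsto_mult_right_zero) (use w0 LIMSEQ_Suc in auto)
    have le: "v (Suc j) n \<le> sqrt 2 * w (Suc n)" for n
    proof -
      define N where "N = Suc n"
      have trm: "real (cnt A (2^i) * cnt (setpow A j) (2^(n+1-i))) =
        sqrt (2^N) * (u i * v j (N-i) * (real i powr (b-1) * real (N+1-i) powr g))"
        if i: "i \<in> {1..n+1}" for i
      proof -
        have e1: "real (cnt A (2^i)) = u i * (sqrt (2^i) * real i powr (b-1))"
          unfolding u_def using i by simp
        have e2: "real (cnt (setpow A j) (2^(n+1-i))) = v j (N-i) * (sqrt (2^(N-i)) * real (N+1-i) powr g)"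
          unfolding v_def g_def N_def using i by (simp add: Suc_diff_le)
        have e3: "sqrt (2^i) * sqrt (2^(N-i)) = sqrt ((2::real)^N)"
          using i unfolding N_def by (simp flip: real_sqrt_mult power_add)
        show ?thesis unfolding of_nat_mult e1 e2 by (simp add: e3[symmetric] algebra_simps)
      qed
      have "real (cnt (setpow A (Suc j)) (2^n)) \<le> real (\<Sum>i=1..n+1. cnt A (2^i) * cnt (setpow A j) (2^(n+1-i)))"
        unfolding of_nat_le_iff setpow.simps by (rule cnt_setprod)
      also have "\<dots> = (\<Sum>i=1..n+1. sqrt (2^N) * (u i * v j (N-i) * (real i powr (b-1) * real (N+1-i) powr g)))"
        unfolding of_nat_sum by (intro sum.cong refl trm)
      also have "\<dots> = sqrt (2^N) * (\<Sum>i=1..N. u i * v j (N-i) * (real i powr (b-1) * real (N+1-i) powr g))"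
        unfolding N_def Suc_eq_plus1 by (rule sum_distrib_left[symmetric])
      also have "(\<Sum>i=1..N. u i * v j (N-i) * (real i powr (b-1) * real (N+1-i) powr g)) = w N * real N powr (b+g)"
        unfolding w_def using N_def by simp
      finally have c: "real (cnt (setpow A (Suc j)) (2^n)) \<le> sqrt (2^N) * (w N * real N powr (b+g))" .
      have ex: "real (Suc j) * b - 1 = b + g" unfolding g_def by (simp add: algebra_simps)
      have sq: "sqrt ((2::real)^N) = sqrt 2 * sqrt (2^n)" unfolding N_def by (simp add: real_sqrt_mult)
      show ?thesis unfolding v_def ex using c unfolding sq N_def
        by (simp add: divide_le_eq algebra_simps real_sqrt_mult)
    qed
    show ?case
      by (rule tendsto_sandwich[of "\<lambda>_. 0" _ _ "\<lambda>n. sqrt 2 * w (Suc n)"])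
         (use vnn le w1 in auto)
  qed
  define S where "S = setsum (setpow A k) (setpow A l)"
  have Slim: "(\<lambda>n. real (cnt S (2^n)) / 2^n) \<longlonglongrightarrow> 0"
  proof -
    have le: "real (cnt S (2^n)) / 2^n \<le> v k n * v l n" for n
    proof -
      have "real (cnt S (2^n)) \<le> real (cnt (setpow A k) (2^n)) * real (cnt (setpow A l) (2^n))"
        unfolding S_def using cnt_setsum[OF zero_notin_setpow[OF A0] zero_notin_setpow[OF A0]]
        by (simp flip: of_nat_mult)
      also have "\<dots> = (v k n * v l n) * (sqrt (2^n) * sqrt (2^n)) * (real (n+1) powr (real k * b - 1) * real (n+1) powr (real l * b - 1))"
        unfolding v_def by simp
      also have "real (n+1) powr (real k * b - 1) * real (n+1) powr (real l * b - 1) = 1"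
        using kl by (simp flip: powr_add)
      also have "sqrt ((2::real)^n) * sqrt (2^n) = 2^n" by simp
      finally show ?thesis by (simp add: divide_le_eq)
    qed
    show ?thesis
      by (rule tendsto_sandwich[of "\<lambda>_. 0" _ _ "\<lambda>n. v k n * v l n"])
         (use le assms(1-3) in \<open>auto intro!: tendsto_mult_zero v0\<close>)
  qed
  have "0 < lower_density S" using assms(5) unfolding S_def .
  then obtain r where r: "0 < ereal r" "ereal r < Liminf at_top (\<lambda>X::real. ereal (real (counting S X) / X))"
    unfolding lower_density_def using ereal_dense2 by blast
  have "\<forall>\<^sub>F X in at_top. ereal r < ereal (real (counting S X) / X)"
    by (rule less_LiminfD[OF r(2)])
  then obtain X0 where X0: "\<And>X. X \<ge> X0 \<Longrightarrow> r < real (counting S X) / X"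
    unfolding eventually_at_top_linorder by auto
  obtain N1 where N1: "\<And>n. n \<ge> N1 \<Longrightarrow> real (cnt S (2^n)) / 2^n < r"
    using order_tendstoD(2)[OF Slim, of r] r(1) by (auto simp: eventually_sequentially)
  define n where "n = max N1 (nat \<lceil>X0\<rceil>)"
  have rn: "real n < 2^n" using less_exp[of n] by (metis of_nat_less_iff of_nat_numeral of_nat_power)
  moreover have "X0 \<le> real (nat \<lceil>X0\<rceil>)" by (rule real_nat_ceiling_ge)
  moreover have "real (nat \<lceil>X0\<rceil>) \<le> real n" unfolding n_def by simp
  ultimately have "X0 \<le> real n" by linarith
  then have "X0 \<le> 2^n" using rn by linarith
  then have "real (2^n) \<ge> X0" by simp
  then have "r < real (counting S (real (2^n))) / real (2^n)" using X0[of "real (2^n)"] by blast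
  then have "r < real (cnt S (2^n)) / 2^n" unfolding counting_cnt by simp
  moreover have "real (cnt S (2^n)) / 2^n < r" using N1 unfolding n_def by auto
  ultimately show False by simp
qed

end
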